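(* Suppose $m=2n$ and $\tilde B=\begin{bmatrix}B\\ I_n\end{bmatrix}$. Then for each vertex $t\in\mathbb T_n$ and each $1\le i\le n$, $\tilde{\mathbf g}_{i;t}=\begin{bmatrix}\mathbf g_{i;t}\\ 0\end{bmatrix}$.
   Context: $[b]_+=\max(b,0)$. $\mathbb T_n$ is the $n$-regular tree with edges labeled $1,\dots,n$, distinct labels at each vertex; $t\overset{k}{-}t'$ denotes an edge labeled $k$; $t_0$ a root. Fix positive integers $r_1,\dots,r_n$ and a skew-symmetrizable integer $n\times n$ matrix $B$; $\tilde B=(b_{ij})$ is the given $m\times n$ matrix. Matrices $\tilde B_t=(b_{ij;t})$: $\tilde B_{t_0}=\tilde B$ and for $t\overset{k}{-}t'$, $b_{ij;t'}=-b_{ij;t}$ if $i=k$ or $j=k$, else $b_{ij;t}+r_k([-\varepsilon b_{ik;t}]_+b_{kj;t}+b_{ik;t}[\varepsilon b_{kj;t}]_+)$ (for $i\le m$, $j\le n$; $\varepsilon\in\{\pm1\}$, results independent of $\varepsilon$). $C_t=(c_{ij;t})$, $n\times n$: $C_{t_0}=I_n$, $c_{ij;t'}=-c_{ij;t}$ if $j=k$, else $c_{ij;t}+r_k(c_{ik;t}[\varepsilon b_{kj;t}]_++[-\varepsilon c_{ik;t}]_+b_{kj;t})$; each column of $C_t$ is sign-coherent (nonzero, entries all $\geq0$ or all $\le0$). $G_t$, $n\times n$ with columns $\mathbf g_{i;t}$: $G_{t_0}=I_n$, $\mathbf g_{i;t'}=\mathbf g_{i;t}$ ($i\neq k$), $\mathbf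 g_{k;t'}=-\mathbf g_{k;t}+r_k(\sum_{j=1}^n[-\varepsilon b_{jk;t}]_+\mathbf g_{j;t}-\sum_{j=1}^n[-\varepsilon c_{jk;t}]_+\mathbf b_j)$, $\mathbf b_j$ the $j$-th column of $B$. $\tilde G_t$, $m\times m$ with columns $\tilde{\mathbf g}_{i;t}$: $\tilde G_{t_0}=I_m$, $\tilde{\mathbf g}_{i;t'}=\tilde{\mathbf g}_{i;t}$ ($i\ne k$), $\tilde{\mathbf g}_{k;t'}=-\tilde{\mathbf g}_{k;t}+r_k(\sum_{j=1}^m[-\varepsilon b_{jk;t}]_+\tilde{\mathbf g}_{j;t}-\sum_{j=1}^n[-\varepsilon c_{jk;t}]_+\tilde{\mathbf b}_{j})$, $\tilde{\mathbf b}_j$ the $j$-th column of $\tilde B$. ($\tilde{\mathbf g}_{i;t}$ is the $g$-vector of a quantum cluster variable of a generalized quantum cluster algebra with principal coefficients.) *)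

theory Defs
  imports Main
begin

text \<open>Matrices are functions nat \<Rightarrow> nat \<Rightarrow> int, indexed from 1 (row, column).
  A vertex t of the n-regular tree is encoded by the (reduced) sequence of
  mutation directions on the unique path from the root t0 to t; each step also
  carries the sign epsilon used in the mutation formulas at that step.\<close>

definition pos :: "int \<Rightarrow> int" where "pos x = max x 0"

definition idm :: "nat \<Rightarrow> nat \<Rightarrow> int" where
  "idm i j = (if i = j then 1 else 0)"

definition skew_symmetrizable :: "nat \<Rightarrow> (nat \<Rightarrow> nat \<Rightarrow> int) \<Rightarrow> bool" where
  "skew_symmetrizable n B \<longleftrightarrow> (\<exists>d :: nat \<Rightarrow> int. (\<forall>i\<in>{1..n}. d i > 0) \<and>
     (\<forall>i\<in>{1..n}. \<forall>j\<in>{1..n}. d i * B i j = - (d j * B j i)))"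

definition mutB :: "(nat \<Rightarrow> int) \<Rightarrow> nat \<Rightarrow> int \<Rightarrow> (nat \<Rightarrow> nat \<Rightarrow> int) \<Rightarrow> nat \<Rightarrow> nat \<Rightarrow> int" where
  "mutB r k e Bt = (\<lambda>i j. if i = k \<or> j = k then - Bt i j
      else Bt i j + r k * (pos (- e * Bt i k) * Bt k j + Bt i k * pos (e * Bt k j)))"

definition mutC :: "(nat \<Rightarrow> int) \<Rightarrow> nat \<Rightarrow> int \<Rightarrow> (nat \<Rightarrow> nat \<Rightarrow> int) \<Rightarrow> (nat \<Rightarrow> nat \<Rightarrow> int)
    \<Rightarrow> nat \<Rightarrow> nat \<Rightarrow> int" where
  "mutC r k e Bt Ct = (\<lambda>i j. if j = k then - Ct i j
      else Ct i j + r k * (Ct i k * pos (e * Bt k j) + pos (- e * Ct i k) * Bt k j))"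

text \<open>Mutation of a G-matrix whose columns are vectors with p components, the
  sum over "b-coefficients" ranges over j = 1..p, and B0 is the fixed initial
  matrix whose columns b_j (j = 1..n) appear in the formula.
  For G_t take p = n and B0 = B; for G~_t take p = m and B0 = B~.\<close>
definition mutG :: "nat \<Rightarrow> nat \<Rightarrow> (nat \<Rightarrow> int) \<Rightarrow> (nat \<Rightarrow> nat \<Rightarrow> int) \<Rightarrow> nat \<Rightarrow> int
    \<Rightarrow> (nat \<Rightarrow> nat \<Rightarrow> int) \<Rightarrow> (nat \<Rightarrow> nat \<Rightarrow> int) \<Rightarrow> (nat \<Rightarrow> nat \<Rightarrow> int) \<Rightarrow> nat \<Rightarrow> nat \<Rightarrow> int" where
  "mutG n p r B0 k e Bt Ct G = (\<lambda>i l. if l \<noteq> k then G i l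
      else - G i k + r k * ((\<Sum>j = 1..p. pos (- e * Bt j k) * G i j)
                            - (\<Sum>j = 1..n. pos (- e * Ct j k) * B0 i j)))"

type_synonym seed = "(nat \<Rightarrow> nat \<Rightarrow> int) \<times> (nat \<Rightarrow> nat \<Rightarrow> int) \<times> (nat \<Rightarrow> nat \<Rightarrow> int) \<times> (nat \<Rightarrow> nat \<Rightarrow> int)"

text \<open>One step t -k- t' acting on (B~_t, C_t, G_t, G~_t).\<close>
definition mut_step :: "nat \<Rightarrow> nat \<Rightarrow> (nat \<Rightarrow> int) \<Rightarrow> (nat \<Rightarrow> nat \<Rightarrow> int) \<Rightarrow> (nat \<Rightarrow> nat \<Rightarrow> int)
    \<Rightarrow> seed \<Rightarrow> nat \<times> int \<Rightarrow> seed" where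
  "mut_step n m r B Btil S ke = (case S of (Bt, Ct, G, Gt) \<Rightarrow> case ke of (k, e) \<Rightarrow>
     (mutB r k e Bt, mutC r k e Bt Ct, mutG n n r B k e Bt Ct G, mutG n m r Btil k e Bt Ct Gt))"

definition seed_at :: "nat \<Rightarrow> nat \<Rightarrow> (nat \<Rightarrow> int) \<Rightarrow> (nat \<Rightarrow> nat \<Rightarrow> int) \<Rightarrow> (nat \<Rightarrow> nat \<Rightarrow> int)
    \<Rightarrow> (nat \<times> int) list \<Rightarrow> seed" where
  "seed_at n m r B Btil ps = foldl (mut_step n m r B Btil) (Btil, idm, idm, idm) ps"

text \<open>Paths from the root in T_n: labels in 1..n, no immediate backtracking
  (so they correspond bijectively to vertices), signs in {1,-1}.\<close>
definition tree_path :: "nat \<Rightarrow> (nat \<times> int) list \<Rightarrow> bool" where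
  "tree_path n ps \<longleftrightarrow> (\<forall>(k, e) \<in> set ps. k \<in> {1..n} \<and> (e = 1 \<or> e = -1)) \<and>
     (\<forall>i. Suc i < length ps \<longrightarrow> fst (ps ! i) \<noteq> fst (ps ! Suc i))"

end

theory Submission
  imports Defs
begin

definition inv_seed :: "nat \<Rightarrow> nat \<Rightarrow> seed \<Rightarrow> bool" where
  "inv_seed n m S = (case S of (Bt, Ct, G, Gt) \<Rightarrow>
     (\<forall>i\<in>{1..n}. \<forall>j\<in>{1..n}. Bt (i+n) j = Ct i j) \<and>
     (\<forall>l j. j > n \<longrightarrow> Gt l j = idm l j) \<and>
     (\<forall>i\<in>{1..n}. \<forall>l\<in>{1..m}. Gt l i = (if l \<le> n then G l i else 0)))"

lemma sum_idm: "l \<in> A \<Longrightarrow> finite A \<Longrightarrow> (\<Sum>j\<in>A. f j * idm l j) = f l"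
proof -
  assume "l \<in> A" "finite A"
  have "(\<lambda>j. f j * idm l j) = (\<lambda>j. if l = j then f j else 0)" by (auto simp: idm_def)
  then show ?thesis using \<open>l \<in> A\<close> \<open>finite A\<close> by (simp only:) (simp add: sum.delta)
qed

lemma sum_idm2: "l \<in> A \<Longrightarrow> finite A \<Longrightarrow> (\<Sum>j\<in>A. f j * idm j l) = f l"
proof -
  assume "l \<in> A" "finite A"
  have "(\<lambda>j. f j * idm j l) = (\<lambda>j. if l = j then f j else 0)" by (auto simp: idm_def)
  then show ?thesis using \<open>l \<in> A\<close> \<open>finite A\<close> by (simp only:) (simp add: sum.delta)
qed

lemma step:
  assumes m: "m = 2 * n"
    and Bd: "\<forall>i\<in>{1..m}. \<forall>j\<in>{1..n}. Btil i j = (if i \<le> n then B i j else idm (i - n) j)"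
    and k: "k \<in> {1..n}"
    and I: "inv_seed n m (Bt, Ct, G, Gt)"
  shows "inv_seed n m (mut_step n m r B Btil (Bt, Ct, G, Gt) (k, e))"
proof -
  from I have a: "\<And>i j. i\<in>{1..n} \<Longrightarrow> j\<in>{1..n} \<Longrightarrow> Bt (i+n) j = Ct i j"
    and b: "\<And>l j. j > n \<Longrightarrow> Gt l j = idm l j"
    and c: "\<And>i l. i\<in>{1..n} \<Longrightarrow> l\<in>{1..m} \<Longrightarrow> Gt l i = (if l \<le> n then G l i else 0)"
    by (auto simp: inv_seed_def)
  have A: "mutB r k e Bt (i+n) j = mutC r k e Bt Ct i j" if "i\<in>{1..n}" "j\<in>{1..n}" for i j
  proof -
    have ne: "i + n \<noteq> k" using that k by auto
    show ?thesis
    proof (cases "j = k")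
      case True then show ?thesis using ne a[OF that] by (simp add: mutB_def mutC_def)
    next
      case False then show ?thesis using ne a[OF that] a[OF that(1) k]
        by (simp add: mutB_def mutC_def algebra_simps)
    qed
  qed
  have Bc: "mutG n m r Btil k e Bt Ct Gt l j = idm l j" if "j > n" for l j
    using that k b by (auto simp: mutG_def)
  have C: "mutG n m r Btil k e Bt Ct Gt l i = (if l \<le> n then mutG n n r B k e Bt Ct G l i else 0)"
    if i: "i\<in>{1..n}" and l: "l\<in>{1..m}" for i l
  proof (cases "i = k")
    case False then show ?thesis using c[OF i l] by (simp add: mutG_def)
  next
    case True
    have split: "(\<Sum>j = 1..m. pos (- e * Bt j k) * Gt l j) =
       (\<Sum>j = 1..n. pos (- e * Bt j k) * Gt l j) + (\<Sum>j = n+1..n+n. pos (- e * Bt j k) * Gt l j)"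
    proof -
      have mm: "m = n + n" using m by simp
      show ?thesis unfolding mm by (rule sum.ub_add_nat) simp
    qed
    have s2: "(\<Sum>j = n+1..n+n. pos (- e * Bt j k) * Gt l j) = (\<Sum>j = n+1..n+n. pos (- e * Bt j k) * idm l j)"
      by (rule sum.cong) (auto simp: b)
    show ?thesis
    proof (cases "l \<le> n")
      case le: True
      have s1: "(\<Sum>j = 1..n. pos (- e * Bt j k) * Gt l j) = (\<Sum>j = 1..n. pos (- e * Bt j k) * G l j)"
        by (rule sum.cong) (use c l le in auto)
      have s3: "(\<Sum>j = n+1..n+n. pos (- e * Bt j k) * idm l j) = 0"
        using le by (intro sum.neutral) (auto simp: idm_def)
      have s4: "(\<Sum>j = 1..n. pos (- e * Ct j k) * Btil l j) = (\<Sum>j = 1..n. pos (- e * Ct j k) * B l j)"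
        by (rule sum.cong) (use Bd l le in auto)
      show ?thesis using True le split s2 s3 s1 s4 c[OF i l] by (simp add: mutG_def)
    next
      case gt: False
      have s1: "(\<Sum>j = 1..n. pos (- e * Bt j k) * Gt l j) = 0"
        by (rule sum.neutral) (use c l gt in auto)
      have lr: "l \<in> {n+1..n+n}" using l gt m by auto
      have s3: "(\<Sum>j = n+1..n+n. pos (- e * Bt j k) * idm l j) = pos (- e * Bt l k)"
        using lr by (simp add: sum_idm)
      have s4: "(\<Sum>j = 1..n. pos (- e * Ct j k) * Btil l j) = (\<Sum>j = 1..n. pos (- e * Ct j k) * idm j (l - n))"
        by (rule sum.cong) (use Bd l gt in \<open>auto simp: idm_def\<close>)
      have s5: "(\<Sum>j = 1..n. pos (- e * Ct j k) * idm j (l - n)) = pos (- e * Ct (l - n) k)"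
        using lr by (intro sum_idm2) auto
      have ln: "l - n \<in> {1..n}" using lr by auto
      have eq: "Bt l k = Ct (l - n) k" using a[OF ln k] lr by simp
      show ?thesis using True gt split s2 s3 s1 s4 s5 eq c[OF i l] by (simp add: mutG_def)
    qed
  qed
  show ?thesis unfolding mut_step_def inv_seed_def prod.case
    using A Bc C by (intro conjI ballI allI impI) simp_all
qed

lemma inv_all:
  assumes m: "m = 2 * n"
    and Bd: "\<forall>i\<in>{1..m}. \<forall>j\<in>{1..n}. Btil i j = (if i \<le> n then B i j else idm (i - n) j)"
    and ks: "\<forall>(k, e) \<in> set ps. k \<in> {1..n}"
  shows "inv_seed n m (seed_at n m r B Btil ps)"
  using ks
proof (induction ps rule: rev_induct)
  case Nil
  have "inv_seed n m (Btil, idm, idm, idm)"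
    unfolding inv_seed_def prod.case
  proof (intro conjI ballI allI impI)
    fix i j assume i: "i \<in> {1..n}" and j: "j \<in> {1..n}"
    have "i + n \<in> {1..m}" "\<not> i + n \<le> n" using i m by auto
    then show "Btil (i + n) j = idm i j" using Bd j by simp
  next
    fix l j :: nat assume "n < j" then show "idm l j = idm l j" by simp
  next
    fix i l assume i: "i \<in> {1..n}" and l: "l \<in> {1..m}"
    show "idm l i = (if l \<le> n then idm l i else 0)" using i by (auto simp: idm_def)
  qed
  then show ?case by (simp add: seed_at_def)
next
  case (snoc x xs)
  obtain k e where x: "x = (k, e)" by (cases x)
  have k: "k \<in> {1..n}" using snoc.prems x by auto
  have "inv_seed n m (seed_at n m r B Btil xs)" using snoc by auto
  moreover obtain Bt Ct G Gt where S: "seed_at n m r B Btil xs = (Bt, Ct, G, Gt)" by (cases "seed_at n m r B Btil xs") auto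
  ultimately have "inv_seed n m (mut_step n m r B Btil (Bt, Ct, G, Gt) (k, e))"
    using step[OF m Bd k] by simp
  then show ?case using S x by (simp add: seed_at_def)
qed

theorem lemmal:
  fixes n m :: nat and r :: "nat \<Rightarrow> int" and B Btil :: "nat \<Rightarrow> nat \<Rightarrow> int"
    and ps :: "(nat \<times> int) list"
  assumes "n \<ge> 1"
    and "\<forall>k\<in>{1..n}. r k > 0"
    and "skew_symmetrizable n B"
    and "m = 2 * n"
    and "\<forall>i\<in>{1..m}. \<forall>j\<in>{1..n}. Btil i j = (if i \<le> n then B i j else idm (i - n) j)"
    and "tree_path n ps"
  shows "\<forall>i\<in>{1..n}. \<forall>l\<in>{1..m}.
           (case seed_at n m r B Btil ps of (Bt, Ct, G, Gt) \<Rightarrow>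
              Gt l i = (if l \<le> n then G l i else 0))"
proof -
  have ks: "\<forall>(k, e) \<in> set ps. k \<in> {1..n}" using assms(6) unfolding tree_path_def by auto
  have "inv_seed n m (seed_at n m r B Btil ps)" using inv_all[OF assms(4) assms(5) ks] .
  then show ?thesis unfolding inv_seed_def by (auto split: prod.splits)
qed

end
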